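(* Let $0<a<1<b$, $\varphi(y)=\max\{y^a,y^b\}$ and $\varphi^{-1}(y)=\min\{y^{1/a},y^{1/b}\}$ for $y>0$, let $c,d>0$ with $cd\le1$, and $g(x)=xF(c,d;c+d;x)$ for $x\in(0,1)$. Then for every $x\in(0,1)$, $$g(x)\le b\,\varphi\!\left(g\!\left(\frac{\varphi^{-1}(x/(1-x))}{1+\varphi^{-1}(x/(1-x))}\right)\right).$$
   Context: $F(a,b;c;x)$ is the Gaussian hypergeometric function $\sum_{n\ge0}\frac{(a)_n(b)_n}{(c)_n}\frac{x^n}{n!}$ ($|x|<1$), with $(a)_n=a(a+1)\cdots(a+n-1)$, $(a)_0=1$. The exponents $a,b$ are distinct from the hypergeometric parameters $c,d$. *)

theory Defs
  imports "HOL-Analysis.Analysis"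
begin

definition hyp2F1 :: "real \<Rightarrow> real \<Rightarrow> real \<Rightarrow> real \<Rightarrow> real" where
  "hyp2F1 a b c x = (\<Sum>n. pochhammer a n * pochhammer b n / (pochhammer c n * fact n) * x ^ n)"

definition phi :: "real \<Rightarrow> real \<Rightarrow> real \<Rightarrow> real" where
  "phi a b y = max (y powr a) (y powr b)"

definition phi_inv :: "real \<Rightarrow> real \<Rightarrow> real \<Rightarrow> real" where
  "phi_inv a b y = min (y powr (1/a)) (y powr (1/b))"

end

theory Submission
  imports Defs
begin

lemma anti_le0: assumes "\<And>n. (a::nat\<Rightarrow>real) (Suc n) \<le> a n" shows "a n \<le> a 0"
  by (induction n) (auto intro: order_trans[OF assms])

lemma summ_bounded:
  fixes f :: "nat \<Rightarrow> real"
  assumes "\<And>n. \<bar>f n\<bar> \<le> C" "\<bar>x\<bar> < 1"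
  shows "summable (\<lambda>n. f n * x^n)"
proof (rule summable_comparison_test)
  show "summable (\<lambda>n. C * \<bar>x\<bar>^n)"
    using assms(2) by (intro summable_mult summable_geometric) simp
  show "\<exists>N. \<forall>n\<ge>N. norm (f n * x ^ n) \<le> C * \<bar>x\<bar> ^ n"
    using assms(1) by (auto simp: abs_mult power_abs intro!: mult_right_mono)
qed

lemma summ_anti:
  fixes a :: "nat \<Rightarrow> real"
  assumes "\<And>n. a (Suc n) \<le> a n" "\<And>n. 0 \<le> a n" "\<bar>x\<bar> < 1"
  shows "summable (\<lambda>n. a n * x^n)"
  using assms anti_le0[of a] by (intro summ_bounded[where C="a 0"]) auto

lemma shift_series:
  fixes a :: "nat \<Rightarrow> real"
  assumes S: "summable (\<lambda>n. a n * x^n)"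
  shows "summable (\<lambda>n. (a (Suc n) - a n) * x^Suc n)"
    and "(1-x) * (\<Sum>n. a n * x^n) = a 0 + (\<Sum>n. (a (Suc n) - a n) * x^Suc n)"
proof -
  have s1: "summable (\<lambda>n. a (Suc n) * x^Suc n)"
    using summable_ignore_initial_segment[OF S, of 1] by simp
  have s2: "summable (\<lambda>n. a n * x^Suc n)"
    using summable_mult2[OF S, of x] by (simp add: mult_ac)
  have e: "(\<lambda>n. (a (Suc n) - a n) * x^Suc n) = (\<lambda>n. a (Suc n) * x^Suc n - a n * x^Suc n)"
    by (simp add: algebra_simps)
  show "summable (\<lambda>n. (a (Suc n) - a n) * x^Suc n)"
    unfolding e using s1 s2 by (rule summable_diff)
  have h1: "(\<Sum>n. a n * x^n) = a 0 + (\<Sum>n. a (Suc n) * x^Suc n)"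
    using suminf_split_head[OF S] by simp
  have h2: "x * (\<Sum>n. a n * x^n) = (\<Sum>n. a n * x^Suc n)"
    using suminf_mult[OF S, of x] by (simp add: mult_ac)
  have h3: "(\<Sum>n. (a (Suc n) - a n) * x^Suc n) = (\<Sum>n. a (Suc n) * x^Suc n) - (\<Sum>n. a n * x^Suc n)"
    unfolding e using suminf_diff[OF s1 s2] by simp
  show "(1-x) * (\<Sum>n. a n * x^n) = a 0 + (\<Sum>n. (a (Suc n) - a n) * x^Suc n)"
    using h1 h2 h3 by (simp add: algebra_simps)
qed

lemma mono_series:
  fixes a :: "nat \<Rightarrow> real"
  assumes an: "\<And>n. a (Suc n) \<le> a n" "\<And>n. 0 \<le> a n" and xz: "0 \<le> z" "z \<le> x" "x < 1"
  shows "(1-x) * (\<Sum>n. a n * x^n) \<le> (1-z) * (\<Sum>n. a n * z^n)"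
proof -
  have Sx: "summable (\<lambda>n. a n * x^n)" using xz by (intro summ_anti) (use an in auto)
  have Sz: "summable (\<lambda>n. a n * z^n)" using xz by (intro summ_anti) (use an in auto)
  have "(\<Sum>n. (a (Suc n) - a n) * x^Suc n) \<le> (\<Sum>n. (a (Suc n) - a n) * z^Suc n)"
  proof (rule suminf_le)
    fix n
    have "z^Suc n \<le> x^Suc n" using xz by (intro power_mono) auto
    then show "(a (Suc n) - a n) * x^Suc n \<le> (a (Suc n) - a n) * z^Suc n"
      using an(1)[of n] by (intro mult_left_mono_neg) auto
  qed (use shift_series(1)[OF Sx] shift_series(1)[OF Sz] in auto)
  then show ?thesis using shift_series(2)[OF Sx] shift_series(2)[OF Sz] by simp
qed

definition A :: "real \<Rightarrow> real \<Rightarrow> nat \<Rightarrow> real" where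
  "A c d n = pochhammer c n * pochhammer d n / (pochhammer (c+d) n * fact n)"

lemma A_Suc: assumes "c > 0" "d > 0"
  shows "A c d (Suc n) = A c d n * ((c+n)*(d+n)/((c+d+n)*(n+1)))"
proof -
  have "pochhammer (c+d) n > 0" using assms by (intro pochhammer_pos) auto
  moreover have "c + d + n > 0" using assms by simp
  ultimately show ?thesis unfolding A_def
    by (simp add: pochhammer_Suc fact_Suc field_simps)
qed

lemma A_pos: assumes "c > 0" "d > 0" shows "A c d n > 0"
  unfolding A_def using assms by (auto intro!: divide_pos_pos mult_pos_pos pochhammer_pos)

lemma A_0: "A c d 0 = 1" by (simp add: A_def)

lemma cd_aux: fixes c d :: real assumes "c > 0" "d > 0" "c*d \<le> 1" shows "2*c*d \<le> c + d"
proof -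
  have e: "(c+d)^2 = (c-d)^2 + 4*(c*d)" by (simp add: power2_eq_square algebra_simps)
  have e2: "(2*c*d)^2 = 4*((c*d)*(c*d))" by (simp add: power2_eq_square algebra_simps)
  have "(c*d)*(c*d) \<le> (c*d)*1" using assms by (intro mult_left_mono) auto
  then have "(2*c*d)^2 \<le> (c+d)^2" using e e2 zero_le_power2[of "c-d"] by linarith
  then show ?thesis by (rule power2_le_imp_le) (use assms in auto)
qed

lemma A_anti: assumes "c > 0" "d > 0" "c*d \<le> 1" shows "A c d (Suc n) \<le> A c d n"
proof -
  have e: "(c+d+n)*(n+1) - (c+n)*(d+n) = c + d + n - c*d" by (simp add: power2_eq_square algebra_simps)
  have "c*d \<le> 2*c*d" using assms by simp
  then have q: "(c+n)*(d+n) \<le> (c+d+n)*(n+1)" using e cd_aux[OF assms] by linarith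
  have "(c+n)*(d+n)/((c+d+n)*(n+1)) \<le> 1"
    using q assms by (subst divide_le_eq_1) auto
  then have "A c d n * ((c+n)*(d+n)/((c+d+n)*(n+1))) \<le> A c d n"
    using A_pos[OF assms(1,2), of n] by (intro mult_left_le) auto
  then show ?thesis using A_Suc[OF assms(1,2), of n] by simp
qed

lemma B_anti: assumes "c > 0" "d > 0" "c*d \<le> 1"
  shows "real (Suc (Suc n)) * A c d (Suc n) \<le> real (Suc n) * A c d n"
proof -
  define m where "m = real n + 1"
  have m1: "m \<ge> 1" by (simp add: m_def)
  have e: "m*m*(c+d+m-1) - (m+1)*(c+m-1)*(d+m-1) = (1-c*d)*(m-1) + (c+d-2*c*d)"
    by (simp add: power2_eq_square algebra_simps)
  have "(1-c*d)*(m-1) \<ge> 0" using assms m1 by simp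
  then have key: "(m+1)*(c+m-1)*(d+m-1) \<le> m*m*(c+d+m-1)"
    using e cd_aux[OF assms] by linarith
  have r: "real (Suc(Suc n)) = m+1" "c+real n = c+m-1" "d+real n=d+m-1" "real (Suc n) = m" "real(n+1)=m" "c+d+real n = c+d+m-1"
    by (simp_all add: m_def)
  have pos: "(c+d+n)*(n+1) > 0" using assms by (simp add: add_pos_nonneg)
  have k2: "real (Suc (Suc n)) * ((c+n)*(d+n)) \<le> real (Suc n) * ((c+d+n)*(n+1))"
    unfolding r using key by (simp add: mult_ac)
  have "real (Suc (Suc n)) * ((c+n)*(d+n)/((c+d+n)*(n+1))) = (real (Suc (Suc n)) * ((c+n)*(d+n)))/((c+d+n)*(n+1))"
    by simp
  also have "\<dots> \<le> real (Suc n)"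
    using k2 pos by (subst pos_divide_le_eq) auto
  finally have "real (Suc (Suc n)) * ((c+n)*(d+n)/((c+d+n)*(n+1))) * A c d n \<le> real (Suc n) * A c d n"
    using A_pos[OF assms(1,2), of n] by (intro mult_right_mono) auto
  then show ?thesis using A_Suc[OF assms(1,2)] by (simp add: mult_ac)
qed


definition Fs :: "real \<Rightarrow> real \<Rightarrow> real \<Rightarrow> real" where
  "Fs c d x = (\<Sum>n. A c d n * x^n)"

lemma hyp_Fs: "hyp2F1 c d (c+d) x = Fs c d x"
  by (simp add: hyp2F1_def Fs_def A_def)

definition bb :: "real \<Rightarrow> real \<Rightarrow> nat \<Rightarrow> real" where
  "bb c d n = (if n = 0 then 0 else A c d (n-1))"

definition BB :: "real \<Rightarrow> real \<Rightarrow> nat \<Rightarrow> real" where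
  "BB c d n = real (Suc n) * A c d n"

definition G :: "real \<Rightarrow> real \<Rightarrow> real \<Rightarrow> real" where
  "G c d u = (\<Sum>n. bb c d n * u^n)"

definition Gp :: "real \<Rightarrow> real \<Rightarrow> real \<Rightarrow> real" where
  "Gp c d u = (\<Sum>n. BB c d n * u^n)"

locale hypctx =
  fixes c d :: real
  assumes cpos: "c > 0" and dpos: "d > 0" and cd1: "c*d \<le> 1"
begin

lemma A_anti': "A c d (Suc n) \<le> A c d n" using A_anti[OF cpos dpos cd1] .
lemma A_nn: "0 \<le> A c d n" using A_pos[OF cpos dpos] less_imp_le by blast
lemma A_le1: "A c d n \<le> 1" using anti_le0[of "A c d", OF A_anti'] A_0 by simp
lemma BB_anti: "BB c d (Suc n) \<le> BB c d n" unfolding BB_def using B_anti[OF cpos dpos cd1] .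
lemma BB_nn: "0 \<le> BB c d n" unfolding BB_def using A_nn by simp
lemma BB_le1: "BB c d n \<le> 1" using anti_le0[of "BB c d", OF BB_anti] A_0 by (simp add: BB_def)

lemma F_summ: "\<bar>x\<bar> < 1 \<Longrightarrow> summable (\<lambda>n. A c d n * x^n)"
  by (rule summ_anti[of "A c d", OF A_anti' A_nn])

lemma bb_summ: "\<bar>x\<bar> < 1 \<Longrightarrow> summable (\<lambda>n. bb c d n * x^n)"
  by (rule summ_bounded[where C=1]) (auto simp: bb_def A_nn A_le1 abs_of_nonneg)

lemma G_eq: "\<bar>x\<bar> < 1 \<Longrightarrow> G c d x = x * Fs c d x"
  using powser_split_head(1)[OF bb_summ, of x] unfolding G_def Fs_def
  by (simp add: bb_def mult_ac)

lemma G_0: "G c d 0 = 0" unfolding G_def by (simp add: bb_def)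

lemma G_deriv: "\<bar>u\<bar> < 1 \<Longrightarrow> DERIV (G c d) u :> Gp c d u"
proof -
  assume u: "\<bar>u\<bar> < 1"
  have "DERIV (\<lambda>x. \<Sum>n. bb c d n * x^n) u :> (\<Sum>n. diffs (bb c d) n * u^n)"
    by (rule termdiffs_strong[where K="(1+\<bar>u\<bar>)/2"]) (use u in \<open>auto intro!: bb_summ\<close>)
  moreover have "diffs (bb c d) = BB c d" by (auto simp: diffs_def bb_def BB_def)
  ultimately show ?thesis unfolding G_def Gp_def by simp
qed

lemma r_mono: "0 \<le> z \<Longrightarrow> z \<le> x \<Longrightarrow> x < 1 \<Longrightarrow> (1-x) * Fs c d x \<le> (1-z) * Fs c d z"
  unfolding Fs_def by (rule mono_series[of "A c d", OF A_anti' A_nn])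

lemma D_mono: "0 \<le> z \<Longrightarrow> z \<le> x \<Longrightarrow> x < 1 \<Longrightarrow> (1-x) * Gp c d x \<le> (1-z) * Gp c d z"
  unfolding Gp_def by (rule mono_series[of "BB c d", OF BB_anti BB_nn])

lemma r_le1: "0 \<le> x \<Longrightarrow> x < 1 \<Longrightarrow> (1-x) * Fs c d x \<le> 1"
  using r_mono[of 0 x] by (simp add: Fs_def A_0)

lemma F_pos: "0 < x \<Longrightarrow> x < 1 \<Longrightarrow> 0 < Fs c d x"
  unfolding Fs_def by (rule suminf_pos) (auto intro!: F_summ mult_pos_pos A_pos[OF cpos dpos])

lemma L_deriv: "(u::real) < 1 \<Longrightarrow> DERIV (\<lambda>u. - ln (1-u)) u :> 1/(1-u)"
proof -
  assume u: "u < 1"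
  have "DERIV (\<lambda>u. 1 - u) u :> -1" by (auto intro!: derivative_eq_intros)
  have l: "DERIV ln (1-u) :> 1/(1-u)" using DERIV_ln_divide[of "1-u"] u by simp
  from DERIV_chain2[OF l \<open>DERIV (\<lambda>u. 1 - u) u :> -1\<close>] u
  have "DERIV (\<lambda>u. ln (1 - u)) u :> 1/(1-u) * -1" by simp
  from DERIV_minus[OF this] show ?thesis by simp
qed

lemma keyB:
  fixes x y bq :: real
  assumes y0: "0 < y" and yx: "y \<le> x" and x1: "x < 1" and bq: "bq \<ge> 1"
    and Lb: "-ln(1-x) \<le> bq * (-ln(1-y))"
  shows "G c d x \<le> bq * G c d y"
proof -
  define Dy where "Dy = (1-y) * Gp c d y"
  define \<phi> where "\<phi> u = G c d u - Dy * (-ln(1-u))" for u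
  have d\<phi>: "DERIV \<phi> u :> Gp c d u - Dy*(1/(1-u))" if "0 \<le> u" "u < 1" for u
    unfolding \<phi>_def[abs_def]
    using that by (auto intro!: derivative_eq_intros G_deriv L_deriv[OF that(2)])
  have 1: "\<phi> x \<le> \<phi> y"
  proof (rule DERIV_nonpos_imp_nonincreasing[OF yx])
    fix u assume u: "y \<le> u" "u \<le> x"
    have "(1-u) * Gp c d u \<le> Dy" unfolding Dy_def using D_mono[of y u] u y0 x1 by simp
    then have "Gp c d u - Dy*(1/(1-u)) \<le> 0" using u x1 by (simp add: field_simps)
    then show "\<exists>y. DERIV \<phi> u :> y \<and> y \<le> 0" using d\<phi>[of u] u y0 x1 by auto
  qed
  have 2: "-\<phi> y \<le> -\<phi> 0"
  proof (rule DERIV_nonpos_imp_nonincreasing[of 0 y "\<lambda>u. - \<phi> u"])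
    fix u assume u: "0 \<le> u" "u \<le> y"
    have "Dy \<le> (1-u) * Gp c d u" unfolding Dy_def using D_mono[of u y] u y0 yx x1 by simp
    then have "-(Gp c d u - Dy*(1/(1-u))) \<le> 0" using u yx x1 by (simp add: field_simps)
    moreover have "DERIV (\<lambda>u. - \<phi> u) u :> -(Gp c d u - Dy*(1/(1-u)))"
      using DERIV_minus[OF d\<phi>[of u]] u yx x1 by simp
    ultimately show "\<exists>z. DERIV (\<lambda>u. - \<phi> u) u :> z \<and> z \<le> 0" by blast
  qed (use y0 in simp)
  have p0: "\<phi> 0 = 0" by (simp add: \<phi>_def G_0)
  define Lx where "Lx = -ln(1-x)"
  define Ly where "Ly = -ln(1-y)"
  have Ly0: "Ly \<ge> 0" unfolding Ly_def using y0 yx x1 by simp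
  have LxLy: "Ly \<le> Lx" unfolding Lx_def Ly_def using y0 yx x1 by simp
  have Gx: "G c d x \<le> G c d y + Dy * (Lx - Ly)" using 1 unfolding \<phi>_def Lx_def Ly_def by (simp add: algebra_simps)
  have Gy: "Dy * Ly \<le> G c d y" using 2 p0 unfolding \<phi>_def Ly_def by simp
  have Gy0: "G c d y \<ge> 0" using G_eq[of y] F_pos[of y] y0 yx x1 by simp
  show ?thesis
  proof (cases "Dy \<ge> 0")
    case True
    have "Lx - Ly \<le> (bq - 1) * Ly" using Lb unfolding Lx_def Ly_def by (simp add: algebra_simps)
    then have "Dy * (Lx - Ly) \<le> Dy * ((bq - 1) * Ly)" using True by (rule mult_left_mono)
    also have "\<dots> = (bq - 1) * (Dy * Ly)" by simp
    also have "\<dots> \<le> (bq - 1) * G c d y" using Gy bq by (intro mult_left_mono) auto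
    finally show ?thesis using Gx by (simp add: algebra_simps)
  next
    case False
    then have "Dy * (Lx - Ly) \<le> 0" using LxLy by (simp add: mult_nonpos_nonneg)
    then have "G c d x \<le> G c d y" using Gx by simp
    also have "\<dots> \<le> bq * G c d y" using Gy0 bq by (simp add: mult_le_cancel_right1)
    finally show ?thesis .
  qed
qed

end
lemma phi_ge: fixes a b z :: real assumes "0 < a" "a < 1" "1 < b" "0 \<le> z" shows "z \<le> phi a b z"
proof (cases "z = 0")
  case True then show ?thesis by (simp add: phi_def)
next
  case False
  then have z: "z > 0" using assms by simp
  show ?thesis
  proof (cases "z \<le> 1")
    case True
    have "z powr 1 \<le> z powr a" using powr_mono'[of a 1 z] True z assms by simp
    then show ?thesis using z by (simp add: phi_def)
  next
    case False
    have "z powr 1 \<le> z powr b" using powr_mono[of 1 b z] False assms by simp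
    then show ?thesis using z by (simp add: phi_def)
  qed
qed

lemma pow_ineq: fixes p b :: real assumes "0 < p" "1 \<le> b" shows "1 + p powr b \<le> (1+p) powr b"
proof -
  have e1: "(1+p) powr b = (1+p) powr (b-1) * (1+p)"
    using powr_add[of "1+p" "b-1" 1] assms by simp
  have e2: "p powr b = p powr (b-1) * p"
    using powr_add[of p "b-1" 1] assms by simp
  have h1: "1 \<le> (1+p) powr (b-1)" using assms by (intro ge_one_powr_ge_zero) auto
  have h2: "p powr (b-1) \<le> (1+p) powr (b-1)" using assms by (intro powr_mono2) auto
  have "p powr (b-1) * p \<le> (1+p) powr (b-1) * p" using h2 assms by (intro mult_right_mono) auto
  then show ?thesis unfolding e1 e2 using h1 by (simp add: algebra_simps)
qed

lemma frac_mono: fixes p t :: real assumes "0 \<le> p" "p \<le> t" shows "p/(1+p) \<le> t/(1+t)"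
  using assms by (simp add: field_simps)

theorem mainTheorem12:
  fixes a b c d :: real and g :: "real \<Rightarrow> real"
  assumes "0 < a" "a < 1" "1 < b"
    and "c > 0" "d > 0" "c * d \<le> 1"
    and "\<And>x. g x = x * hyp2F1 c d (c + d) x"
  shows "\<forall>x\<in>{0<..<1}. g x \<le> b * phi a b (g (phi_inv a b (x / (1 - x)) / (1 + phi_inv a b (x / (1 - x)))))"
proof
  fix x :: real assume "x \<in> {0<..<1}"
  then have x0: "0 < x" and x1: "x < 1" by auto
  interpret hypctx c d using assms(4-6) by unfold_locales
  have gG: "g u = G c d u" if "0 \<le> u" "u < 1" for u
    using G_eq[of u] that assms(7)[of u] by (simp add: hyp_Fs)
  have gF: "g u = u * Fs c d u" for u using assms(7)[of u] by (simp add: hyp_Fs)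
  define t where "t = x / (1 - x)"
  define p where "p = phi_inv a b t"
  define y where "y = p / (1 + p)"
  have t0: "t > 0" using x0 x1 by (simp add: t_def)
  have xt: "x = t * (1 - x)" using x1 by (simp add: t_def)
  have xt2: "x = t/(1+t)" using x1 by (simp add: t_def field_simps)
  have phib: "b * phi a b (g y) \<ge> phi a b (g y)"
  proof -
    have "phi a b (g y) \<ge> 0" by (simp add: phi_def le_max_iff_disj)
    then show ?thesis using assms(3) by (simp add: mult_le_cancel_right1)
  qed
  have goal: "g x \<le> b * phi a b (g y)"
  proof (cases "t < 1")
    case True
    have pa: "t powr (1/a) \<le> t powr (1/b)"
      using True t0 assms(1,2,3) by (intro powr_mono') (auto simp: field_simps)
    then have pdef: "p = t powr (1/a)" by (simp add: p_def phi_inv_def)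
    have p0: "p > 0" using t0 by (simp add: pdef)
    have pt: "p \<le> t" using powr_mono'[of 1 "1/a" t] True t0 assms(1,2) by (simp add: pdef)
    have tp: "t = p powr a" using t0 assms(1) by (simp add: pdef powr_powr)
    have y0: "0 < y" and y1: "y < 1" using p0 by (auto simp: y_def)
    have yx: "y \<le> x" unfolding y_def xt2 using p0 pt by (intro frac_mono) auto
    have yp: "y = p * (1 - y)" using p0 by (simp add: y_def field_simps)
    define ry where "ry = (1-y) * Fs c d y"
    have ry0: "ry > 0" unfolding ry_def using F_pos[OF y0 y1] y1 by simp
    have ry1: "ry \<le> 1" unfolding ry_def using r_le1[of y] y0 y1 by simp
    have rxy: "(1-x) * Fs c d x \<le> ry" unfolding ry_def using r_mono[of y x] y0 yx x1 by simp
    have gx: "g x = t * ((1-x) * Fs c d x)" using gF[of x] xt by (metis mult.assoc)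
    have gy: "g y = p * ry" using gF[of y] yp unfolding ry_def by (metis mult.assoc)
    have "g x \<le> t * ry" unfolding gx using rxy t0 by (intro mult_left_mono) auto
    also have "\<dots> = p powr a * ry powr 1" using tp ry0 by simp
    also have "\<dots> \<le> p powr a * ry powr a"
      using powr_mono'[of a 1 ry] ry0 ry1 assms(2) by (intro mult_left_mono) auto
    also have "\<dots> = g y powr a" using gy p0 ry0 by (simp add: powr_mult)
    also have "\<dots> \<le> phi a b (g y)" by (simp add: phi_def)
    finally show ?thesis using phib by linarith
  next
    case False
    then have t1: "t \<ge> 1" by simp
    have pa: "t powr (1/b) \<le> t powr (1/a)"
      using t1 assms(1,2,3) by (intro powr_mono) (auto simp: field_simps)
    then have pdef: "p = t powr (1/b)" by (simp add: p_def phi_inv_def)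
    have p1: "p \<ge> 1" using t1 assms(3) by (simp add: pdef ge_one_powr_ge_zero)
    have pt: "p \<le> t" using powr_mono[of "1/b" 1 t] t1 assms(3) by (simp add: pdef)
    have tp: "t = p powr b" using t0 assms(3) by (simp add: pdef powr_powr)
    have y0: "0 < y" and y1: "y < 1" using p1 by (auto simp: y_def)
    have yx: "y \<le> x" unfolding y_def xt2 using p1 pt by (intro frac_mono) auto
    have Lx: "-ln(1-x) = ln (1+t)"
    proof -
      have "1 - x = 1/(1+t)" using t0 unfolding xt2 by (simp add: field_simps)
      then show ?thesis using t0 by (simp add: ln_div)
    qed
    have Ly: "-ln(1-y) = ln (1+p)"
    proof -
      have "1 - y = 1/(1+p)" using p1 unfolding y_def by (simp add: field_simps)
      then show ?thesis using p1 by (simp add: ln_div)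
    qed
    have "ln (1+t) \<le> ln ((1+p) powr b)"
      using pow_ineq[of p b] p1 assms(3) t0 unfolding tp by (subst ln_le_cancel_iff) (auto simp: add_pos_nonneg)
    also have "\<dots> = b * ln (1+p)" using p1 by (simp add: ln_powr)
    finally have Lb: "-ln(1-x) \<le> b * (-ln(1-y))" using Lx Ly by simp
    have "G c d x \<le> b * G c d y" using keyB[OF y0 yx x1 _ Lb] assms(3) by simp
    then have "g x \<le> b * g y" using gG[of x] gG[of y] x0 x1 y0 y1 by simp
    also have "\<dots> \<le> b * phi a b (g y)"
    proof -
      have "g y \<ge> 0" using gF[of y] F_pos[OF y0 y1] y0 by simp
      then show ?thesis using phi_ge[OF assms(1-3)] assms(3) by (intro mult_left_mono) auto
    qed
    finally show ?thesis .
  qed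
  then show "g x \<le> b * phi a b (g (phi_inv a b (x / (1 - x)) / (1 + phi_inv a b (x / (1 - x)))))"
    by (simp add: y_def p_def t_def)
qed

end
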